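(* Let $(\mathbb{F}(\alpha,\beta),\sigma)$ be a bivariate difference field extension of a difference field $(\mathbb{F},\sigma)$, and let $g\in\mathbb{F}(\alpha,\beta)$ be a nonzero rational function. Suppose $$\frac{\sigma g}{g}=\frac{p}{q},$$ where $p,q\in\mathbb{F}[\alpha,\beta]$ are nonzero polynomials with $\gcd(p,q)=1$. Then either $p,q\in\mathbb{F}$, or $\mathrm{Spr}_\sigma(p,q)\cup\mathrm{Spr}_\sigma(q,p)\neq\emptyset$.
   Context: A bivariate difference field extension $(\mathbb{F}(\alpha,\beta),\sigma)$ of a difference field $(\mathbb{F},\sigma)$ is the rational function field $\mathbb{F}(\alpha,\beta)$ in two algebraically independent transcendental elements $\alpha,\beta$ over $\mathbb{F}$, together with an automorphism $\sigma$ of $\mathbb{F}(\alpha,\beta)$ extending $\sigma$ on $\mathbb{F}$ and satisfying $\sigma(\alpha)=\beta$, $\sigma(\beta)=u\alpha+v\beta$ with $v\in\mathbb{F}$, $u\in\mathbb{F}\setminus\{0\}$. $\deg$ denotes total degree in $\alpha,\beta$. For nonzero $p,q\in\mathbb{F}[\alpha,\beta]$, the spread is $\mathrm{Spr}_\sigma(p,q)=\{m\in\mathbb{N} : \deg(\gcd(p,\sigma^m q))>0\}$. *)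

theory Defs
  imports "HOL-Computational_Algebra.Computational_Algebra"
begin

text \<open>Bivariate polynomials F[alpha,beta] are modelled as 'a poly poly:
  the outer variable is beta, the inner (coefficient) variable is alpha.
  Rational functions F(alpha,beta) are the fraction field 'a poly poly fract.\<close>

definition var_alpha :: "'a::field_gcd poly poly" where
  "var_alpha = [:[:0, 1:]:]"

definition var_beta :: "'a::field_gcd poly poly" where
  "var_beta = [:0, 1:]"

definition const2 :: "'a::field_gcd \<Rightarrow> 'a poly poly" where
  "const2 c = [:[:c:]:]"

definition tdeg :: "'a::field_gcd poly poly \<Rightarrow> nat" where
  "tdeg f = Max {degree (coeff f j) + j | j. j \<le> degree f \<and> coeff f j \<noteq> 0} "

text \<open>The automorphism sigma on F[alpha,beta]: apply s to the coefficients,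
  and substitute alpha := beta, beta := u*alpha + v*beta.\<close>
definition sigma_pol :: "('a::field_gcd \<Rightarrow> 'a) \<Rightarrow> 'a \<Rightarrow> 'a \<Rightarrow> 'a poly poly \<Rightarrow> 'a poly poly" where
  "sigma_pol s u v f =
     (\<Sum>j\<le>degree f. (\<Sum>i\<le>degree (coeff f j).
         const2 (s (coeff (coeff f j) i)) * var_beta ^ i)
       * (const2 u * var_alpha + const2 v * var_beta) ^ j)"

definition sigma_rat :: "('a::field_gcd \<Rightarrow> 'a) \<Rightarrow> 'a \<Rightarrow> 'a \<Rightarrow> 'a poly poly fract \<Rightarrow> 'a poly poly fract" where
  "sigma_rat s u v g =
     (let (a, b) = (SOME (a, b). b \<noteq> 0 \<and> g = Fract a b)
      in Fract (sigma_pol s u v a) (sigma_pol s u v b))"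

definition field_aut :: "('a::field_gcd \<Rightarrow> 'a) \<Rightarrow> bool" where
  "field_aut s \<longleftrightarrow> bij s \<and> (\<forall>x y. s (x + y) = s x + s y) \<and>
     (\<forall>x y. s (x * y) = s x * s y) \<and> s 1 = 1"

definition spread :: "('a::field_gcd \<Rightarrow> 'a) \<Rightarrow> 'a \<Rightarrow> 'a \<Rightarrow> 'a poly poly \<Rightarrow> 'a poly poly \<Rightarrow> nat set" where
  "spread s u v p q = {m. tdeg (gcd p ((sigma_pol s u v ^^ m) q)) > 0}"

end

theory Submission
  imports Defs
begin

definition rhom :: "('a::comm_ring_1 \<Rightarrow> 'b::comm_ring_1) \<Rightarrow> bool" where
  "rhom h \<longleftrightarrow> (\<forall>x y. h (x + y) = h x + h y) \<and> (\<forall>x y. h (x * y) = h x * h y) \<and> h 1 = 1"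

lemma rhom_add: "rhom h \<Longrightarrow> h (x + y) = h x + h y" by (simp add: rhom_def)
lemma rhom_mult: "rhom h \<Longrightarrow> h (x * y) = h x * h y" by (simp add: rhom_def)
lemma rhom_1: "rhom h \<Longrightarrow> h 1 = 1" by (simp add: rhom_def)
lemma rhom_0: "rhom h \<Longrightarrow> h 0 = 0"
  using rhom_add[of h 0 0] by simp
lemma rhom_sum: "rhom h \<Longrightarrow> h (sum f A) = (\<Sum>x\<in>A. h (f x))"
  by (induction A rule: infinite_finite_induct) (auto simp: rhom_0 rhom_add)
lemma rhom_prod: "rhom h \<Longrightarrow> h (prod f A) = (\<Prod>x\<in>A. h (f x))"
  by (induction A rule: infinite_finite_induct) (auto simp: rhom_1 rhom_mult)
lemma rhom_power: "rhom h \<Longrightarrow> h (x ^ n) = h x ^ n"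
  by (induction n) (auto simp: rhom_1 rhom_mult)
lemma rhom_comp: "rhom f \<Longrightarrow> rhom g \<Longrightarrow> rhom (f \<circ> g)"
  by (simp add: rhom_def)
lemma rhom_id: "rhom id" by (simp add: rhom_def)

lemma rhom_map_poly: assumes h: "rhom h" shows "rhom (map_poly h)"
proof -
  have h0: "h 0 = 0" using h by (rule rhom_0)
  have a: "map_poly h (x + y) = map_poly h x + map_poly h y" for x y
    by (rule poly_eqI) (simp add: coeff_map_poly h0 rhom_add[OF h])
  have m: "map_poly h (x * y) = map_poly h x * map_poly h y" for x y
    by (rule poly_eqI) (simp add: coeff_map_poly h0 coeff_mult rhom_sum[OF h] rhom_mult[OF h])
  have o: "map_poly h 1 = 1" using rhom_1[OF h] by simp
  show ?thesis using a m o by (simp add: rhom_def)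
qed

lemma rhom_poly: "rhom (\<lambda>p. poly p x)"
  by (simp add: rhom_def)

lemma rhom_inv: assumes "rhom h" "bij h" shows "rhom (inv h)"
proof -
  have a: "inv h (h z) = z" for z using assms(2) by (simp add: bij_is_inj)
  have b: "h (inv h z) = z" for z using assms(2) by (simp add: bij_is_surj surj_f_inv_f)
  have 1: "inv h (x + y) = inv h x + inv h y" for x y
  proof -
    have "x + y = h (inv h x + inv h y)" by (simp add: rhom_add[OF assms(1)] b)
    then show ?thesis using a by simp
  qed
  have 2: "inv h (x * y) = inv h x * inv h y" for x y
  proof -
    have "x * y = h (inv h x * inv h y)" by (simp add: rhom_mult[OF assms(1)] b)
    then show ?thesis using a by simp
  qed
  have 3: "inv h 1 = 1" using a[of 1] rhom_1[OF assms(1)] by simp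
  show ?thesis using 1 2 3 by (simp add: rhom_def)
qed

definition raut :: "('a::comm_ring_1 \<Rightarrow> 'a) \<Rightarrow> bool" where
  "raut h \<longleftrightarrow> rhom h \<and> bij h"

lemma raut_inv: "raut h \<Longrightarrow> raut (inv h)"
  by (simp add: raut_def rhom_inv bij_imp_bij_inv)

lemma raut_funpow: "raut h \<Longrightarrow> raut (h ^^ n)"
  by (induction n) (auto simp: raut_def rhom_id rhom_comp bij_comp)

context
  fixes h :: "'a::factorial_ring_gcd \<Rightarrow> 'a"
  assumes ra: "raut h"
begin

lemma ra_rhom: "rhom h" using ra by (simp add: raut_def)
lemma ra_inv1: "inv h (h z) = z" using ra by (simp add: raut_def bij_is_inj)
lemma ra_inv2: "h (inv h z) = z" using ra by (simp add: raut_def bij_is_surj surj_f_inv_f)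
lemma ra_ihom: "rhom (inv h)" using ra raut_def raut_inv by blast

lemma ra_dvd: "x dvd y \<Longrightarrow> h x dvd h y"
proof -
  assume "x dvd y" then obtain k where "y = x * k" by (elim dvdE)
  then have "h y = h x * h k" by (simp add: rhom_mult[OF ra_rhom])
  then show ?thesis by (rule dvdI)
qed
lemma ra_idvd: "x dvd y \<Longrightarrow> inv h x dvd inv h y"
proof -
  assume "x dvd y" then obtain k where "y = x * k" by (elim dvdE)
  then have "inv h y = inv h x * inv h k" by (simp add: rhom_mult[OF ra_ihom])
  then show ?thesis by (rule dvdI)
qed
lemma ra_dvd_iff: "h x dvd h y \<longleftrightarrow> x dvd y"
proof
  assume "h x dvd h y"
  from ra_idvd[OF this] show "x dvd y" by (simp add: ra_inv1)
qed (rule ra_dvd)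
lemma ra_eq0: "h x = 0 \<longleftrightarrow> x = 0"
proof
  assume "h x = 0"
  then have "inv h (h x) = 0" by (simp add: rhom_0[OF ra_ihom])
  then show "x = 0" by (simp add: ra_inv1)
qed (simp add: rhom_0[OF ra_rhom])
lemma ra_unit: "is_unit (h x) \<longleftrightarrow> is_unit x"
proof -
  have "is_unit (h x) \<longleftrightarrow> h x dvd h 1" by (simp add: rhom_1[OF ra_rhom])
  then show ?thesis by (simp add: ra_dvd_iff)
qed
lemma ra_coprime: assumes "coprime x y" shows "coprime (h x) (h y)"
proof (rule coprimeI)
  fix c assume "c dvd h x" "c dvd h y"
  then have "h (inv h c) dvd h x" "h (inv h c) dvd h y" by (simp_all add: ra_inv2)
  then have "inv h c dvd x" "inv h c dvd y" by (simp_all add: ra_dvd_iff)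
  then have "is_unit (inv h c)" using assms coprime_common_divisor by blast
  then have "is_unit (h (inv h c))" by (simp add: ra_unit)
  then show "is_unit c" by (simp add: ra_inv2)
qed
lemma ra_prime_elem: assumes p: "prime_elem p" shows "prime_elem (h p)"
proof (rule prime_elemI)
  show "h p \<noteq> 0" using p by (simp add: ra_eq0)
  show "\<not> is_unit (h p)" using p by (simp add: ra_unit)
  fix a b assume "h p dvd a * b"
  then have "h p dvd h (inv h a * inv h b)" by (simp add: rhom_mult[OF ra_rhom] ra_inv2)
  then have "p dvd inv h a * inv h b" by (simp add: ra_dvd_iff)
  then have "p dvd inv h a \<or> p dvd inv h b" using p prime_elem_dvd_multD by blast
  then have "h p dvd h (inv h a) \<or> h p dvd h (inv h b)" by (simp add: ra_dvd_iff)
  then show "h p dvd a \<or> h p dvd b" by (simp add: ra_inv2)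
qed

lemma ra_size: "size (prime_factorization (h x)) = size (prime_factorization x)"
proof (induction x rule: prime_divisors_induct)
  case zero
  then show ?case by (simp add: ra_rhom rhom_0)
next
  case (unit x)
  then show ?case by (simp add: prime_factorization_unit ra_unit)
next
  case (factor p x)
  show ?case
  proof (cases "x = 0")
    case True
    then show ?thesis by (simp add: rhom_0[OF ra_rhom])
  next
    case False
    have pe: "prime_elem (h p)" using factor(1) ra_prime_elem by (simp add: prime_def)
    have "prime_factorization (h p) = prime_factorization (normalize (h p))" by simp
    also have "\<dots> = {#normalize (h p)#}"
      using pe by (intro prime_factorization_prime) simp
    finally have 1: "size (prime_factorization (h p)) = 1" by simp
    have hp0: "h p \<noteq> 0" "h x \<noteq> 0" using False factor(1) ra_eq0 by auto
    have "h (p * x) = h p * h x" by (simp add: ra_rhom rhom_mult)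
    then show ?thesis
      using hp0 False factor by (simp add: prime_factorization_mult 1 prime_factorization_prime)
  qed
qed

end

definition sub :: "('a::field_gcd \<Rightarrow> 'a) \<Rightarrow> 'a poly poly \<Rightarrow> 'a poly poly \<Rightarrow> 'a poly poly \<Rightarrow> 'a poly poly" where
  "sub s A B f = poly (map_poly (\<lambda>c. poly (map_poly (\<lambda>x. const2 (s x)) c) A) f) B"

lemma const2_rhom: "rhom const2"
  by (simp add: rhom_def const2_def flip: one_pCons)

lemma rhom_sub: "rhom s \<Longrightarrow> rhom (sub s A B)"
proof -
  assume s: "rhom s"
  have r1: "rhom (\<lambda>x. const2 (s x))" using rhom_comp[OF const2_rhom s] by (simp add: o_def)
  have r2: "rhom (\<lambda>c. poly (map_poly (\<lambda>x. const2 (s x)) c) A)"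
    using rhom_comp[OF rhom_poly rhom_map_poly[OF r1]] by (simp add: o_def)
  show ?thesis unfolding sub_def
    using rhom_comp[OF rhom_poly rhom_map_poly[OF r2]] by (simp add: o_def)
qed

lemma poly_sum_le: "degree (p :: 'a::comm_semiring_1 poly) \<le> n \<Longrightarrow> poly p x = (\<Sum>i\<le>n. coeff p i * x ^ i)"
proof -
  assume d: "degree p \<le> n"
  have "poly p x = (\<Sum>i\<le>degree p. coeff p i * x ^ i)" by (rule poly_altdef)
  also have "\<dots> = (\<Sum>i\<le>n. coeff p i * x ^ i)"
    by (rule sum.mono_neutral_left) (use d in \<open>auto simp: coeff_eq_0\<close>)
  finally show ?thesis .
qed

lemma sub_sum: assumes "s 0 = 0"
  shows "sub s A B f = (\<Sum>j\<le>degree f. (\<Sum>i\<le>degree (coeff f j).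
         const2 (s (coeff (coeff f j) i)) * A ^ i) * B ^ j)"
proof -
  have c0: "const2 (s 0) = 0" using assms by (simp add: const2_def)
  let ?E = "\<lambda>c. poly (map_poly (\<lambda>x. const2 (s x)) c) A"
  have E: "?E c = (\<Sum>i\<le>degree c. const2 (s (coeff c i)) * A ^ i)" for c
  proof -
    have "?E c = (\<Sum>i\<le>degree c. coeff (map_poly (\<lambda>x. const2 (s x)) c) i * A ^ i)"
      by (rule poly_sum_le[OF map_poly_degree_leq])
    then show ?thesis by (simp add: coeff_map_poly c0)
  qed
  have E0: "?E 0 = 0" by simp
  have "sub s A B f = (\<Sum>j\<le>degree f. coeff (map_poly ?E f) j * B ^ j)"
    unfolding sub_def by (rule poly_sum_le[OF map_poly_degree_leq])
  also have "\<dots> = (\<Sum>j\<le>degree f. ?E (coeff f j) * B ^ j)"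
    by (simp only: coeff_map_poly[of ?E, OF E0])
  finally show ?thesis by (simp only: E)
qed

lemma sigma_pol_sub: "s 0 = 0 \<Longrightarrow> sigma_pol s u v = sub s var_beta (const2 u * var_alpha + const2 v * var_beta)"
  by (rule ext) (simp add: sigma_pol_def sub_sum)

lemma sub_comp:
  assumes "rhom P" "s 0 = 0" "t 0 = 0" "\<And>x. P (const2 (s x)) = const2 (t x)"
  shows "P (sub s A B f) = sub t (P A) (P B) f"
  by (simp add: sub_sum assms rhom_sum[OF assms(1)] rhom_mult[OF assms(1)] rhom_power[OF assms(1)])

lemma sub_const: "s 0 = 0 \<Longrightarrow> sub s A B (const2 x) = const2 (s x)"
  by (simp add: sub_def const2_def map_poly_pCons)

lemma sub_alpha: "s 0 = 0 \<Longrightarrow> s 1 = 1 \<Longrightarrow> sub s A B var_alpha = A"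
  by (simp add: sub_def var_alpha_def const2_def map_poly_pCons one_pCons[symmetric])

lemma sub_beta: "s 0 = 0 \<Longrightarrow> s 1 = 1 \<Longrightarrow> sub s A B var_beta = B"
  by (simp add: sub_def var_beta_def const2_def map_poly_pCons one_pCons[symmetric])

lemma pCons_sum: "(\<Sum>i\<in>A. [:f i:]) = [:\<Sum>i\<in>A. f i:]"
  by (induction A rule: infinite_finite_induct) auto

lemma sub_id: "sub (\<lambda>x. x) var_alpha var_beta f = f"
proof -
  have inner: "(\<Sum>i\<le>degree c. const2 (coeff c i) * var_alpha ^ i) = [:c:]" for c :: "'a poly"
  proof -
    have "(\<Sum>i\<le>degree c. const2 (coeff c i) * var_alpha ^ i) = (\<Sum>i\<le>degree c. [:monom (coeff c i) i:])"
      by (intro sum.cong refl) (simp add: const2_def var_alpha_def monom_altdef poly_const_pow mult_to_poly)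
    also have "\<dots> = [:\<Sum>i\<le>degree c. monom (coeff c i) i:]"
      by (rule pCons_sum)
    finally show ?thesis by (simp add: poly_as_sum_of_monoms)
  qed
  have "sub (\<lambda>x. x) var_alpha var_beta f = (\<Sum>j\<le>degree f. monom (coeff f j) j)"
    by (simp add: sub_sum inner var_beta_def monom_altdef)
  then show ?thesis by (simp add: poly_as_sum_of_monoms)
qed

lemma const2_0: "const2 0 = 0" by (simp add: const2_def)
lemma const2_1: "const2 1 = 1" by (simp add: const2_def flip: one_pCons)
lemma const2_mult: "const2 (x * y) = const2 x * const2 y" by (simp add: rhom_mult[OF const2_rhom])
lemma const2_add: "const2 (x + y) = const2 x + const2 y" by (simp add: rhom_add[OF const2_rhom])

lemma field_aut_rhom: "field_aut s \<Longrightarrow> rhom s" by (simp add: field_aut_def rhom_def)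

lemma sigma_raut:
  fixes s :: "'a::field_gcd \<Rightarrow> 'a"
  assumes fa: "field_aut s" and u: "u \<noteq> 0"
  shows "raut (sigma_pol s u v)"
proof -
  have rs: "rhom s" using fa by (rule field_aut_rhom)
  have bs: "bij s" using fa by (simp add: field_aut_def)
  define t where "t = inv s"
  have rt: "rhom t" unfolding t_def by (rule rhom_inv[OF rs bs])
  have ts: "t (s x) = x" for x unfolding t_def using bs by (simp add: bij_is_inj)
  have st: "s (t x) = x" for x unfolding t_def using bs by (simp add: bij_is_surj surj_f_inv_f)
  have s0: "s 0 = 0" and s1: "s 1 = 1" using rs by (simp_all add: rhom_0 rhom_1)
  have t0: "t 0 = 0" and t1: "t 1 = 1" using rt by (simp_all add: rhom_0 rhom_1)
  define L where "L = const2 u * var_alpha + const2 v * var_beta"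
  define c where "c = t (- v / u)"
  define d where "d = t (1 / u)"
  define C where "C = const2 c * var_alpha + const2 d * var_beta"
  define \<sigma> where "\<sigma> = sub s var_beta L"
  define \<tau> where "\<tau> = sub t C var_alpha"
  have sig: "sigma_pol s u v = \<sigma>" unfolding \<sigma>_def L_def by (rule sigma_pol_sub[of s, OF s0])
  have rsig: "rhom \<sigma>" unfolding \<sigma>_def by (rule rhom_sub[OF rs])
  have rtau: "rhom \<tau>" unfolding \<tau>_def by (rule rhom_sub[OF rt])
  have sc: "s c = - v / u" and sd: "s d = 1 / u" unfolding c_def d_def by (simp_all add: st)
  have sigC: "\<sigma> C = var_alpha"
  proof -
    have "\<sigma> C = const2 (s c) * var_beta + const2 (s d) * L"
      unfolding C_def \<sigma>_def
      by (simp add: rhom_add[OF rhom_sub[OF rs]] rhom_mult[OF rhom_sub[OF rs]] sub_const s0 sub_alpha sub_beta s1)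
    also have "\<dots> = const2 (s d * u) * var_alpha + const2 (s c + s d * v) * var_beta"
      unfolding L_def const2_mult const2_add by (simp add: algebra_simps)
    also have "\<dots> = var_alpha" using u by (simp add: sc sd const2_1 const2_0)
    finally show ?thesis .
  qed
  have tauL: "\<tau> L = var_beta"
  proof -
    have "\<tau> L = const2 (t u) * C + const2 (t v) * var_alpha"
      unfolding L_def \<tau>_def
      by (simp add: rhom_add[OF rhom_sub[OF rt]] rhom_mult[OF rhom_sub[OF rt]] sub_const t0 sub_alpha sub_beta t1)
    also have "\<dots> = const2 (t u * c + t v) * var_alpha + const2 (t u * d) * var_beta"
      unfolding C_def const2_mult const2_add by (simp add: algebra_simps)
    also have "t u * c + t v = t (u * (- v / u) + v)" unfolding c_def by (simp only: rhom_add[OF rt] rhom_mult[OF rt])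
    also have "\<dots> = 0" using u t0 by simp
    also have "t u * d = t (u * (1 / u))" unfolding d_def by (simp only: rhom_mult[OF rt])
    also have "\<dots> = 1" using u t1 by simp
    finally show ?thesis by (simp add: const2_0 const2_1)
  qed
  have st_id: "\<sigma> (\<tau> f) = f" for f
  proof -
    have e1: "\<sigma> (\<tau> f) = sub (\<lambda>x. s (t x)) (\<sigma> C) (\<sigma> var_alpha) f"
      unfolding \<tau>_def by (rule sub_comp[of _ t, OF rsig t0]) (simp_all add: st s0 t0 \<sigma>_def sub_const)
    have e2: "\<sigma> var_alpha = var_beta" unfolding \<sigma>_def by (simp add: sub_alpha s0 s1)
    have e3: "sub (\<lambda>x. s (t x)) var_alpha var_beta f = f" by (simp add: st sub_id)
    show ?thesis by (simp only: e1 e2 sigC e3)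
  qed
  have ts_id: "\<tau> (\<sigma> f) = f" for f
  proof -
    have e1: "\<tau> (\<sigma> f) = sub (\<lambda>x. t (s x)) (\<tau> var_beta) (\<tau> L) f"
      unfolding \<sigma>_def by (rule sub_comp[of _ s, OF rtau s0]) (simp_all add: ts s0 t0 \<tau>_def sub_const)
    have e2: "\<tau> var_beta = var_alpha" unfolding \<tau>_def by (simp add: sub_beta t0 t1)
    have e3: "sub (\<lambda>x. t (s x)) var_alpha var_beta f = f" by (simp add: ts sub_id)
    show ?thesis by (simp only: e1 e2 tauL e3)
  qed
  have "bij \<sigma>" by (rule o_bij[of \<tau>]) (auto simp: st_id ts_id)
  then show ?thesis using rsig sig by (simp add: raut_def)
qed

lemma tdeg_unit:
  fixes x :: "'a::field_gcd poly poly"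
  assumes "is_unit x" shows "tdeg x = 0"
proof -
  obtain c where c: "x = [:c:]" "is_unit c" using assms by (auto simp: is_unit_poly_iff)
  obtain k where k0: "c = [:k:]" "is_unit k" using c(2) by (auto simp: is_unit_poly_iff)
  have k: "c = [:k:]" "k \<noteq> 0" using k0 by auto
  have "{degree (coeff x j) + j | j. j \<le> degree x \<and> coeff x j \<noteq> 0} = {0}"
    using c k by auto
  then show ?thesis unfolding tdeg_def by simp
qed

lemma tdeg_zero_unit:
  fixes x :: "'a::field_gcd poly poly"
  assumes x0: "x \<noteq> 0" and t: "tdeg x = 0" shows "is_unit x"
proof -
  let ?S = "{degree (coeff x j) + j | j. j \<le> degree x \<and> coeff x j \<noteq> 0}"
  have fin: "finite ?S"
    by (rule finite_subset[of _ "(\<lambda>j. degree (coeff x j) + j) ` {..degree x}"]) auto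
  have mem: "degree (coeff x (degree x)) + degree x \<in> ?S" using x0 by auto
  have "degree (coeff x (degree x)) + degree x \<le> Max ?S" using Max_ge[OF fin mem] .
  then have "degree (coeff x (degree x)) + degree x = 0" using t unfolding tdeg_def by linarith
  then have d1: "degree x = 0" "degree (coeff x (degree x)) = 0" by auto
  have d: "degree x = 0" "degree (coeff x 0) = 0" using d1(2) unfolding d1(1) by (simp_all add: d1(1))
  have e1: "x = [:coeff x 0:]" using d(1) by (rule degree_0_id[symmetric])
  have e2: "coeff x 0 = [:coeff (coeff x 0) 0:]" using d(2) by (rule degree_0_id[symmetric])
  have nz: "coeff x 0 \<noteq> 0" using x0 e1 by auto
  then have nz2: "coeff (coeff x 0) 0 \<noteq> 0" using e2 by auto
  then have "is_unit (coeff (coeff x 0) 0)" by (simp add: dvd_field_iff)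
  then have "is_unit [:coeff (coeff x 0) 0:]" by (simp only: is_unit_const_poly_iff)
  then have "is_unit (coeff x 0)" using e2 by simp
  then have "is_unit [:coeff x 0:]" by (simp only: is_unit_const_poly_iff)
  then show ?thesis using e1 by simp
qed

lemma omega_dvd:
  fixes x y :: "'b::factorial_semiring"
  assumes "x dvd y" "x \<noteq> 0" "y \<noteq> 0"
  shows "size (prime_factorization x) \<le> size (prime_factorization y)"
  using assms prime_factorization_subset_iff_dvd size_mset_mono by blast

theorem theorem2p4:
  fixes s :: "'a::field_gcd \<Rightarrow> 'a" and u v :: 'a
    and g :: "'a poly poly fract" and p q :: "'a poly poly"
  assumes "field_aut s"
    and "u \<noteq> 0"
    and "g \<noteq> 0"
    and "p \<noteq> 0" and "q \<noteq> 0"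
    and "gcd p q = 1"
    and "sigma_rat s u v g / g = Fract p q"
  shows "(tdeg p = 0 \<and> tdeg q = 0) \<or> spread s u v p q \<union> spread s u v q p \<noteq> {}"
proof (rule disjCI)
  assume "\<not> (spread s u v p q \<union> spread s u v q p \<noteq> {})"
  then have sp1: "spread s u v p q = {}" and sp2: "spread s u v q p = {}" by auto
  note p0 = assms(4) and q0 = assms(5)
  define \<sigma> where "\<sigma> = sigma_pol s u v"
  have ra: "raut \<sigma>" unfolding \<sigma>_def by (rule sigma_raut[OF assms(1,2)])
  have raN: "raut (\<sigma> ^^ n)" for n by (rule raut_funpow[OF ra])
  have rN: "rhom (\<sigma> ^^ n)" for n using raN[of n] by (simp add: raut_def)
  have nzN: "(\<sigma> ^^ n) x \<noteq> 0" if "x \<noteq> 0" for n x using ra_eq0[OF raN[of n]] that by simp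
  have H1: "coprime p ((\<sigma> ^^ m) q)" for m
  proof -
    have "m \<notin> spread s u v p q" using sp1 by simp
    then have "tdeg (gcd p ((\<sigma> ^^ m) q)) = 0" unfolding spread_def \<sigma>_def by simp
    moreover have "gcd p ((\<sigma> ^^ m) q) \<noteq> 0" using p0 by simp
    ultimately have "is_unit (gcd p ((\<sigma> ^^ m) q))" using tdeg_zero_unit by blast
    then show ?thesis by (simp only: is_unit_gcd)
  qed
  have H2: "coprime q ((\<sigma> ^^ m) p)" for m
  proof -
    have "m \<notin> spread s u v q p" using sp2 by simp
    then have "tdeg (gcd q ((\<sigma> ^^ m) p)) = 0" unfolding spread_def \<sigma>_def by simp
    moreover have "gcd q ((\<sigma> ^^ m) p) \<noteq> 0" using q0 by simp
    ultimately have "is_unit (gcd q ((\<sigma> ^^ m) p))" using tdeg_zero_unit by blast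
    then show ?thesis by (simp only: is_unit_gcd)
  qed
  have cop: "coprime ((\<sigma> ^^ i) p) ((\<sigma> ^^ j) q)" for i j
  proof (cases "i \<le> j")
    case True
    then have "(\<sigma> ^^ j) q = (\<sigma> ^^ i) ((\<sigma> ^^ (j - i)) q)"
      by (metis funpow_add le_add_diff_inverse o_apply)
    then show ?thesis using ra_coprime[OF raN[of i] H1[of "j - i"]] by simp
  next
    case False
    then have "(\<sigma> ^^ i) p = (\<sigma> ^^ j) ((\<sigma> ^^ (i - j)) p)"
      by (metis funpow_add le_add_diff_inverse nat_le_linear o_apply)
    then show ?thesis using ra_coprime[OF raN[of j] H2[of "i - j"]] by (simp add: coprime_commute)
  qed
  obtain a0 b0 where g_ab0: "g = Fract a0 b0" "b0 \<noteq> 0" by (cases g) auto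
  define ab where "ab = (SOME (a, b). b \<noteq> 0 \<and> g = Fract a b)"
  have "case ab of (a, b) \<Rightarrow> b \<noteq> 0 \<and> g = Fract a b"
    unfolding ab_def by (rule someI_ex) (use g_ab0 in auto)
  then obtain a b where ab: "ab = (a, b)" "b \<noteq> 0" "g = Fract a b" by (cases ab) auto
  have a0: "a \<noteq> 0" using assms(3) ab(3) by (auto simp: fract_collapse)
  have srat: "sigma_rat s u v g = Fract (\<sigma> a) (\<sigma> b)"
    unfolding sigma_rat_def \<sigma>_def ab_def[symmetric] using ab(1) by simp
  have sa0: "\<sigma> a \<noteq> 0" and sb0: "\<sigma> b \<noteq> 0" using nzN[of a 1] nzN[of b 1] a0 ab(2) by simp_all
  have "Fract (\<sigma> a * b) (\<sigma> b * a) = Fract p q" using assms(7) srat ab(3) by simp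
  then have eq: "\<sigma> a * b * q = p * (\<sigma> b * a)"
    using eq_fract(1)[of "\<sigma> b * a" q] sb0 a0 q0 by simp
  define P where "P N = (\<Prod>i<N. (\<sigma> ^^ i) p)" for N
  define Q where "Q N = (\<Prod>i<N. (\<sigma> ^^ i) q)" for N
  have swap: "(\<sigma> ^^ Suc N) x = (\<sigma> ^^ N) (\<sigma> x)" for N x
    by (simp add: funpow_swap1)
  have base: "(\<sigma> ^^ Suc N) a * (\<sigma> ^^ N) b * (\<sigma> ^^ N) q = (\<sigma> ^^ N) p * ((\<sigma> ^^ Suc N) b * (\<sigma> ^^ N) a)" for N
  proof -
    have "(\<sigma> ^^ N) (\<sigma> a * b * q) = (\<sigma> ^^ N) (p * (\<sigma> b * a))" using eq by simp
    then show ?thesis by (simp add: rhom_mult[OF rN] funpow_swap1)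
  qed
  have main: "(\<sigma> ^^ N) a * b * Q N = P N * ((\<sigma> ^^ N) b * a)" for N
  proof (induction N)
    case 0
    then show ?case by (simp add: P_def Q_def)
  next
    case (Suc N)
    define X where "X = (\<sigma> ^^ N) a"
    define Y where "Y = (\<sigma> ^^ N) b"
    define X' where "X' = (\<sigma> ^^ Suc N) a"
    define Y' where "Y' = (\<sigma> ^^ Suc N) b"
    define qN where "qN = (\<sigma> ^^ N) q"
    define pN where "pN = (\<sigma> ^^ N) p"
    have IH: "X * b * Q N = P N * (Y * a)" using Suc.IH unfolding X_def Y_def .
    have B: "X' * Y * qN = pN * (Y' * X)" using base[of N] unfolding X'_def Y_def qN_def pN_def Y'_def X_def .
    have XY: "X * Y \<noteq> 0" unfolding X_def Y_def using nzN a0 ab(2) by simp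
    have "(X * Y) * (X' * b * (Q N * qN)) = (X * b * Q N) * (X' * Y * qN)" by (simp add: ac_simps)
    also have "\<dots> = (P N * (Y * a)) * (pN * (Y' * X))" using IH B by simp
    also have "\<dots> = (X * Y) * ((P N * pN) * (Y' * a))" by (simp add: ac_simps)
    finally have "X' * b * (Q N * qN) = (P N * pN) * (Y' * a)" using XY by simp
    then show ?case unfolding X'_def Y'_def P_def Q_def qN_def pN_def by simp
  qed
  have copPQ: "coprime (P N) (Q N)" for N
    unfolding P_def Q_def by (intro prod_coprime_left prod_coprime_right cop)
  have P0: "P N \<noteq> 0" for N unfolding P_def using nzN p0 by simp
  have Q0: "Q N \<noteq> 0" for N unfolding Q_def using nzN q0 by simp
  define \<Omega> where "\<Omega> x = size (prime_factorization x)" for x :: "'a poly poly"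
  have \<Omega>mult: "\<Omega> (x * y) = \<Omega> x + \<Omega> y" if "x \<noteq> 0" "y \<noteq> 0" for x y
    unfolding \<Omega>_def using that by (simp add: prime_factorization_mult)
  have \<Omega>N: "\<Omega> ((\<sigma> ^^ N) x) = \<Omega> x" for N x unfolding \<Omega>_def by (rule ra_size[OF raN])
  have \<Omega>P: "\<Omega> (P N) = N * \<Omega> p" for N
  proof (induction N)
    case 0 then show ?case by (simp add: P_def \<Omega>_def)
  next
    case (Suc N)
    have "P (Suc N) = P N * (\<sigma> ^^ N) p" unfolding P_def by simp
    then show ?case using Suc \<Omega>mult[OF P0 nzN[OF p0]] \<Omega>N by simp
  qed
  have \<Omega>Q: "\<Omega> (Q N) = N * \<Omega> q" for N
  proof (induction N)
    case 0 then show ?case by (simp add: Q_def \<Omega>_def)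
  next
    case (Suc N)
    have "Q (Suc N) = Q N * (\<sigma> ^^ N) q" unfolding Q_def by simp
    then show ?case using Suc \<Omega>mult[OF Q0 nzN[OF q0]] \<Omega>N by simp
  qed
  have bndP: "N * \<Omega> p \<le> \<Omega> a + \<Omega> b" for N
  proof -
    have "P N dvd ((\<sigma> ^^ N) a * b) * Q N" using main[of N] by (metis dvd_triv_left)
    then have d: "P N dvd (\<sigma> ^^ N) a * b" using coprime_dvd_mult_left_iff[OF copPQ] by blast
    have nz: "(\<sigma> ^^ N) a * b \<noteq> 0" using nzN[OF a0] ab(2) by simp
    have "\<Omega> (P N) \<le> \<Omega> ((\<sigma> ^^ N) a * b)" unfolding \<Omega>_def by (rule omega_dvd[OF d P0 nz])
    also have "\<dots> = \<Omega> a + \<Omega> b" using \<Omega>mult[OF nzN[OF a0] ab(2)] \<Omega>N by simp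
    finally show ?thesis using \<Omega>P by simp
  qed
  have bndQ: "N * \<Omega> q \<le> \<Omega> a + \<Omega> b" for N
  proof -
    have "Q N dvd P N * ((\<sigma> ^^ N) b * a)" using main[of N] by (metis dvd_triv_right)
    then have d: "Q N dvd (\<sigma> ^^ N) b * a"
      using coprime_dvd_mult_right_iff[of "Q N" "P N"] copPQ coprime_commute by blast
    have nz: "(\<sigma> ^^ N) b * a \<noteq> 0" using nzN[OF ab(2)] a0 by simp
    have "\<Omega> (Q N) \<le> \<Omega> ((\<sigma> ^^ N) b * a)" unfolding \<Omega>_def by (rule omega_dvd[OF d Q0 nz])
    also have "\<dots> = \<Omega> a + \<Omega> b" using \<Omega>mult[OF nzN[OF ab(2)] a0] \<Omega>N by simp
    finally show ?thesis using \<Omega>Q by simp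
  qed
  have "\<Omega> p = 0"
  proof (rule ccontr)
    assume "\<Omega> p \<noteq> 0"
    then have "1 \<le> \<Omega> p" by simp
    then have "Suc (\<Omega> a + \<Omega> b) * 1 \<le> Suc (\<Omega> a + \<Omega> b) * \<Omega> p" by (rule mult_le_mono2)
    then have "Suc (\<Omega> a + \<Omega> b) \<le> Suc (\<Omega> a + \<Omega> b) * \<Omega> p" by (simp only: mult_1_right)
    with bndP[of "Suc (\<Omega> a + \<Omega> b)"] show False by linarith
  qed
  then have "is_unit p" using p0 unfolding \<Omega>_def by (simp add: prime_factorization_empty_iff)
  moreover have "\<Omega> q = 0"
  proof (rule ccontr)
    assume "\<Omega> q \<noteq> 0"
    then have "1 \<le> \<Omega> q" by simp
    then have "Suc (\<Omega> a + \<Omega> b) * 1 \<le> Suc (\<Omega> a + \<Omega> b) * \<Omega> q" by (rule mult_le_mono2)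
    then have "Suc (\<Omega> a + \<Omega> b) \<le> Suc (\<Omega> a + \<Omega> b) * \<Omega> q" by (simp only: mult_1_right)
    with bndQ[of "Suc (\<Omega> a + \<Omega> b)"] show False by linarith
  qed
  then have "is_unit q" using q0 unfolding \<Omega>_def by (simp add: prime_factorization_empty_iff)
  ultimately show "tdeg p = 0 \<and> tdeg q = 0" by (simp add: tdeg_unit)
qed

end
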